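(* Let $n\in\mathbf{N}$ and $A\subset[n]$ have property P. Then for each $i\in\{1,3\}$, $$\left|A\cap\left(\tfrac n4,\tfrac n3\right]\cap(1+2\mathbf{Z})\right|+\left|A\cap\left(\tfrac{2n}{3},n\right]\cap(i+4\mathbf{Z})\right|\leqslant\frac{n}{12}+3.$$
   Context: A set $A\subset\mathbf{N}$ has property P if there are no $x,y,z\in A$ (not necessarily distinct $x,y$) with $z<x$, $z<y$ and $z\mid x+y$. Intervals denote sets of integers. *)

theory Defs
  imports Complex_Main "HOL-Number_Theory.Cong"
begin

definition propP :: "nat set \<Rightarrow> bool" where
  "propP A \<longleftrightarrow> A \<subseteq> {1..} \<and>
     \<not> (\<exists>x\<in>A. \<exists>y\<in>A. \<exists>z\<in>A. z < x \<and> z < y \<and> z dvd (x + y))"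

end

theory Submission
  imports Defs
begin

lemma card_le1: "finite X \<Longrightarrow> (\<And>a b. a \<in> X \<Longrightarrow> b \<in> X \<Longrightarrow> a = b) \<Longrightarrow> card X \<le> 1"
  by (simp add: card_le_Suc0_iff_eq)

lemma injh: "(x::nat) \<in> {3*a, 3*a-2, 3*a+2} \<Longrightarrow> x \<in> {3*b, 3*b-2, 3*b+2} \<Longrightarrow> a \<ge> 1 \<Longrightarrow> b \<ge> 1 \<Longrightarrow> a = b"
  by (auto; presburger)

lemma l4: "odd (b::nat) \<Longrightarrow> (r = 1 \<or> r = 3) \<Longrightarrow> (3*b) mod 4 \<noteq> r \<Longrightarrow> (3*b+2) mod 4 = r" by presburger

lemma l5: "odd (b::nat) \<Longrightarrow> (r = 1 \<or> r = 3) \<Longrightarrow> (3*b) mod 4 \<noteq> r \<Longrightarrow> (3*b-2) mod 4 = r"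
proof -
  assume a: "odd b" "r = 1 \<or> r = 3" "(3*b) mod 4 \<noteq> r"
  have "(3*b+2) mod 4 = r" using a by (rule l4)
  moreover have "3*b+2 = (3*b-2) + 4" using a(1) by (cases b) auto
  ultimately show ?thesis by (metis mod_add_self2)
qed

lemma l6: "(x0::nat) \<le> x \<Longrightarrow> x mod 4 = x0 mod 4 \<Longrightarrow> x = x0 + 4*((x-x0) div 4)"
proof -
  assume a: "x0 \<le> x" "x mod 4 = x0 mod 4"
  then have "4 dvd x - x0" using mod_eq_dvd_iff_nat by blast
  then show ?thesis using a(1) by auto
qed

theorem mainTheorem13:
  fixes n :: nat and A :: "nat set" and i :: int
  assumes "A \<subseteq> {1..n}" and "propP A" and "i \<in> {1, 3}"
  shows "real (card {x \<in> A. real n / 4 < real x \<and> real x \<le> real n / 3 \<and> odd x})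
       + real (card {x \<in> A. 2 * real n / 3 < real x \<and> real x \<le> real n \<and> [int x = i] (mod 4)})
       \<le> real n / 12 + 3"
proof -
  from assms(3) obtain r :: nat where r: "r = 1 \<or> r = 3" "i = int r" by auto
  have cg: "\<And>x::nat. [int x = i] (mod 4) \<longleftrightarrow> x mod 4 = r"
  proof -
    fix x :: nat
    have "[int x = int r] (mod int 4) \<longleftrightarrow> [x = r] (mod 4)" by (rule cong_int_iff)
    also have "\<dots> \<longleftrightarrow> x mod 4 = r" using r(1) by (auto simp: cong_def)
    finally show "[int x = i] (mod 4) \<longleftrightarrow> x mod 4 = r" using r(2) by simp
  qed
  define B where "B = {x\<in>A. n < 4*x \<and> 3*x \<le> n \<and> odd x}"
  define C where "C = {x\<in>A. 2*n < 3*x \<and> x \<le> n \<and> x mod 4 = r}"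
  define S where "S = {x. 2*n < 3*x \<and> x \<le> n \<and> x mod 4 = r}"
  define Bg where "Bg = {b\<in>B. 3*b+2 \<le> n \<and> 2*n+6 < 9*b}"
  define f where "f b = (if (3*b) mod 4 = r then 3*b else if 3*b+2 \<in> A then 3*b-2 else 3*b+2)" for b
  have eB: "{x \<in> A. real n / 4 < real x \<and> real x \<le> real n / 3 \<and> odd x} = B"
  proof -
    have "\<And>x. (real n / 4 < real x) = (n < 4*x)" by (simp add: field_simps) linarith
    moreover have "\<And>x. (real x \<le> real n / 3) = (3*x \<le> n)" by (simp add: field_simps) linarith
    ultimately show ?thesis unfolding B_def by auto
  qed
  have eC: "{x \<in> A. 2 * real n / 3 < real x \<and> real x \<le> real n \<and> [int x = i] (mod 4)} = C"
  proof -
    have "\<And>x. (2 * real n / 3 < real x) = (2*n < 3*x)" by (simp add: field_simps) linarith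
    then show ?thesis unfolding C_def using cg by auto
  qed
  have P: "\<And>x y z. x\<in>A \<Longrightarrow> y\<in>A \<Longrightarrow> z\<in>A \<Longrightarrow> z<x \<Longrightarrow> z<y \<Longrightarrow> \<not> z dvd (x+y)"
    using assms(2) unfolding propP_def by blast
  have finS: "finite S" by (rule finite_subset[of _ "{..n}"]) (auto simp: S_def)
  have CS: "C \<subseteq> S" unfolding C_def S_def by auto
  have finBg: "finite Bg" by (rule finite_subset[of _ "{..n}"]) (auto simp: Bg_def B_def)
  have fS: "f ` Bg \<subseteq> S - C"
  proof
    fix y assume "y \<in> f ` Bg"
    then obtain b where b: "b \<in> Bg" "y = f b" by auto
    have bA: "b \<in> A" and h1: "n < 4*b" "3*b \<le> n" "odd b" "3*b+2 \<le> n" "2*n+6 < 9*b"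
      using b(1) unfolding Bg_def B_def by auto
    have d6: "b dvd 6*b" by simp
    show "y \<in> S - C"
    proof (cases "(3*b) mod 4 = r")
      case True
      then have y: "y = 3*b" using b(2) f_def by simp
      have "3*b \<notin> A" using P[OF _ _ bA, of "3*b" "3*b"] h1 by auto
      then show ?thesis using y True h1 unfolding S_def C_def by auto
    next
      case False
      have m1: "(3*b+2) mod 4 = r" "(3*b-2) mod 4 = r" using l4[OF h1(3) r(1) False] l5[OF h1(3) r(1) False] by auto
      show ?thesis
      proof (cases "3*b+2 \<in> A")
        case True
        then have y: "y = 3*b-2" using b(2) f_def False by simp
        have e: "(3*b+2) + (3*b-2) = 6*b" using h1 by simp
        have "3*b-2 \<notin> A" using P[OF True _ bA, of "3*b-2"] h1 e by auto
        then show ?thesis using y m1 h1 unfolding S_def C_def by auto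
      next
        case F2: False
        then have y: "y = 3*b+2" using b(2) f_def False by simp
        then show ?thesis using y m1 h1 F2 unfolding S_def C_def by auto
      qed
    qed
  qed
  have inj: "inj_on f Bg"
  proof
    fix a b assume a: "a \<in> Bg" and b: "b \<in> Bg" and e: "f a = f b"
    have "a \<ge> 1" "b \<ge> 1" using a b unfolding Bg_def B_def by auto
    moreover have "\<And>c. f c \<in> {3*c, 3*c-2, 3*c+2}" unfolding f_def by auto
    ultimately show "a = b" using e injh by metis
  qed
  have c1: "card C + card Bg \<le> card S"
  proof -
    have "card C + card (f ` Bg) = card (C \<union> f ` Bg)"
      using fS finS CS by (intro card_Un_disjoint[symmetric]) (auto intro: finite_subset)
    also have "\<dots> \<le> card S" using fS CS finS by (intro card_mono) auto
    finally show ?thesis using card_image[OF inj] by simp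
  qed
  define X where "X = {b\<in>B. n < 3*b+2}"
  define Y where "Y = {b\<in>B. 9*b \<le> 2*n+6}"
  have finB: "finite B" by (rule finite_subset[of _ "{..n}"]) (auto simp: B_def)
  have cX: "card X \<le> 1"
    by (rule card_le1) (auto simp: X_def B_def intro: finite_subset[OF _ finB])
  have cY: "card Y \<le> 1"
    by (rule card_le1) (auto simp: Y_def B_def intro: finite_subset[OF _ finB])
  have c2: "card B \<le> card Bg + 2"
  proof -
    have "B \<subseteq> Bg \<union> X \<union> Y" unfolding Bg_def X_def Y_def by auto
    then have "card B \<le> card (Bg \<union> X \<union> Y)"
      by (intro card_mono) (auto simp: X_def Y_def Bg_def intro: finite_subset[OF _ finB])
    also have "\<dots> \<le> card Bg + card X + card Y"
      by (meson add_right_mono card_Un_le order_trans)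
    finally show ?thesis using cX cY by simp
  qed
  have c3: "12 * card S \<le> n + 12"
  proof (cases "S = {}")
    case True then show ?thesis by simp
  next
    case False
    define x0 where "x0 = Min S"
    have x0: "x0 \<in> S" using Min_in[OF finS False] x0_def by simp
    have sub: "S \<subseteq> (\<lambda>k. x0 + 4*k) ` {..(n-x0) div 4}"
    proof
      fix x assume x: "x \<in> S"
      have le: "x0 \<le> x" using Min_le[OF finS x] x0_def by simp
      have "x mod 4 = x0 mod 4" "x \<le> n" using x x0 unfolding S_def by auto
      then have "x = x0 + 4*((x-x0) div 4)" "(x-x0) div 4 \<le> (n-x0) div 4"
        using le by (simp add: l6, intro div_le_mono, simp)
      then show "x \<in> (\<lambda>k. x0 + 4*k) ` {..(n-x0) div 4}" by force
    qed
    have "card S \<le> card ((\<lambda>k. x0 + 4*k) ` {..(n-x0) div 4})"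
      by (rule card_mono[OF _ sub]) simp
    also have "\<dots> \<le> Suc ((n-x0) div 4)" using card_image_le[of "{..(n-x0) div 4}"] by simp
    finally have "card S \<le> Suc ((n-x0) div 4)" .
    moreover have "2*n < 3*x0" using x0 unfolding S_def by auto
    ultimately show ?thesis by linarith
  qed
  have "card B + card C \<le> card S + 2" using c1 c2 by linarith
  then have "12 * (card B + card C) \<le> n + 36" using c3 by (simp add: add_mult_distrib2)
  then have "12 * (real (card B) + real (card C)) \<le> real n + 36" by (metis of_nat_add of_nat_le_iff of_nat_mult of_nat_numeral)
  then show ?thesis unfolding eB eC by (simp add: field_simps)
qed

end
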